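(* Let $\pi_0,\pi_1,\dots$ be generated by policy mirror descent (PMD) with step sizes $\eta_t>0$ that are non-decreasing in $t$. Then for every $k\ge1$ and every $s\in\mathcal S$, $$V^{\pi_k}(s)-V^{\pi^*}(s)\le\frac{\sum_{q\in\mathcal S}\kappa^{\pi^*}_s(q)\,\big[\eta_0\big(V^{\pi_0}(q)-V^{\pi^*}(q)\big)+D^{\pi^*}_{\pi_0}(q)\big]}{\eta_0(1-\gamma)k}.$$
   Context: An infinite-horizon discounted MDP: finite state space $\mathcal S$, finite action space $\mathcal A$, transition probabilities $\mathcal P(s'\mid s,a)$, cost $c:\mathcal S\times\mathcal A\to\mathbb R$, discount $\gamma\in[0,1)$. A policy $\pi$ assigns $\pi(\cdot\mid s)\in\Delta_{|\mathcal A|}$ (probability simplex) to each state. Let $\omega$ be a differentiable convex distance-generating function on $\Delta_{|\mathcal A|}$, and for policies $\pi,\pi'$ let $D^{\pi'}_{\pi}(s):=\omega(\pi'(\cdot\mid s))-\omega(\pi(\cdot\mid s))-\langle\nabla\omega(\pi(\cdot\mid s)),\pi'(\cdot\mid s)-\pi(\cdot\mid s)\rangle$ (Bregman distance). For each $s$, $p\mapsto h^p(s)$ is a closed convex function on $\Delta_{|\mathcal A|}$ that is $\mu_h$-strongly convex w.r.t. this Bregman distance for some $\mu_h\ge0$: $h^{p}(s)-h^{p'}(s)-\langle (h')^{p'}(s,\cdot),p-p'\rangle\ge\mu_h[\omega(p)-\omega(p')-\langle\nabla\omega(p'),p-p'\rangle]$ for subgradients $(h')^{p'}(s,\cdot)$.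 $V^\pi(s)=\mathbb E[\sum_{t\ge0}\gamma^t(c(s_t,a_t)+h^{\pi(\cdot\mid s_t)}(s_t))\mid s_0=s,\ a_t\sim\pi(\cdot\mid s_t),\ s_{t+1}\sim\mathcal P(\cdot\mid s_t,a_t)]$, $Q^\pi(s,a)$ the same with $a_0=a$. $\pi^*$ is an optimal policy ($V^{\pi^*}(s)\le V^\pi(s)$ for all $\pi,s$). $\kappa^\pi_s(q):=(1-\gamma)\sum_{t\ge0}\gamma^t\Pr^\pi\{s_t=q\mid s_0=s\}$. PMD: given $\pi_0$ and step sizes $\eta_t$, for all $s$, $\pi_{t+1}(\cdot\mid s)=\operatorname{argmin}_{p\in\Delta_{|\mathcal A|}}\{\eta_t[\langle Q^{\pi_t}(s,\cdot),p\rangle+h^{p}(s)]+\omega(p)-\omega(\pi_t(\cdot\mid s))-\langle\nabla\omega(\pi_t(\cdot\mid s)),p-\pi_t(\cdot\mid s)\rangle\}$. *)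

theory Defs
  imports "HOL-Analysis.Analysis"
begin

definition prob_simplex :: "(real^'a::finite) set" where
  "prob_simplex = {p. (\<forall>a. 0 \<le> p $ a) \<and> (\<Sum>a\<in>UNIV. p $ a) = 1}"

definition is_policy :: "('s \<Rightarrow> real^'a::finite) \<Rightarrow> bool" where
  "is_policy \<pi> \<longleftrightarrow> (\<forall>s. \<pi> s \<in> prob_simplex)"

definition bregman :: "(real^'a::finite \<Rightarrow> real) \<Rightarrow> (real^'a \<Rightarrow> real^'a) \<Rightarrow> real^'a \<Rightarrow> real^'a \<Rightarrow> real" where
  "bregman \<omega> gw p' p = \<omega> p' - \<omega> p - gw p \<bullet> (p' - p)"

definition Dpol :: "(real^'a::finite \<Rightarrow> real) \<Rightarrow> (real^'a \<Rightarrow> real^'a) \<Rightarrow> ('s \<Rightarrow> real^'a) \<Rightarrow> ('s \<Rightarrow> real^'a) \<Rightarrow> 's \<Rightarrow> real" where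
  "Dpol \<omega> gw \<pi>' \<pi> s = bregman \<omega> gw (\<pi>' s) (\<pi> s)"

definition Ppol :: "('s::finite \<Rightarrow> 'a::finite \<Rightarrow> 's \<Rightarrow> real) \<Rightarrow> ('s \<Rightarrow> real^'a) \<Rightarrow> 's \<Rightarrow> 's \<Rightarrow> real" where
  "Ppol P \<pi> r q = (\<Sum>a\<in>UNIV. \<pi> r $ a * P r a q)"

fun state_dist :: "('s::finite \<Rightarrow> 'a::finite \<Rightarrow> 's \<Rightarrow> real) \<Rightarrow> ('s \<Rightarrow> real^'a) \<Rightarrow> ('s \<Rightarrow> real) \<Rightarrow> nat \<Rightarrow> 's \<Rightarrow> real" where
  "state_dist P \<pi> \<mu> 0 q = \<mu> q"
| "state_dist P \<pi> \<mu> (Suc t) q = (\<Sum>r\<in>UNIV. state_dist P \<pi> \<mu> t r * Ppol P \<pi> r q)"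

definition Prob_state :: "('s::finite \<Rightarrow> 'a::finite \<Rightarrow> 's \<Rightarrow> real) \<Rightarrow> ('s \<Rightarrow> real^'a) \<Rightarrow> nat \<Rightarrow> 's \<Rightarrow> 's \<Rightarrow> real" where
  "Prob_state P \<pi> t s q = state_dist P \<pi> (\<lambda>r. if r = s then 1 else 0) t q"

definition stage_cost :: "('s \<Rightarrow> 'a::finite \<Rightarrow> real) \<Rightarrow> (real^'a \<Rightarrow> 's \<Rightarrow> real) \<Rightarrow> ('s \<Rightarrow> real^'a) \<Rightarrow> 's \<Rightarrow> real" where
  "stage_cost c h \<pi> q = (\<Sum>a\<in>UNIV. \<pi> q $ a * c q a) + h (\<pi> q) q"

definition Vf :: "('s::finite \<Rightarrow> 'a::finite \<Rightarrow> 's \<Rightarrow> real) \<Rightarrow> ('s \<Rightarrow> 'a \<Rightarrow> real) \<Rightarrow> (real^'a \<Rightarrow> 's \<Rightarrow> real) \<Rightarrow> real \<Rightarrow> ('s \<Rightarrow> real^'a) \<Rightarrow> 's \<Rightarrow> real" where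
  "Vf P c h \<gamma> \<pi> s = (\<Sum>t. \<gamma> ^ t * (\<Sum>q\<in>UNIV. Prob_state P \<pi> t s q * stage_cost c h \<pi> q))"

text \<open>Q^pi(s,a): same expectation with a_0 = a fixed (s_1 ~ P(.|s,a), then following pi).\<close>
definition Qf :: "('s::finite \<Rightarrow> 'a::finite \<Rightarrow> 's \<Rightarrow> real) \<Rightarrow> ('s \<Rightarrow> 'a \<Rightarrow> real) \<Rightarrow> (real^'a \<Rightarrow> 's \<Rightarrow> real) \<Rightarrow> real \<Rightarrow> ('s \<Rightarrow> real^'a) \<Rightarrow> 's \<Rightarrow> 'a \<Rightarrow> real" where
  "Qf P c h \<gamma> \<pi> s a = c s a + h (\<pi> s) s
     + (\<Sum>t. \<gamma> ^ Suc t * (\<Sum>q\<in>UNIV. state_dist P \<pi> (P s a) t q * stage_cost c h \<pi> q))"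

definition kappa :: "('s::finite \<Rightarrow> 'a::finite \<Rightarrow> 's \<Rightarrow> real) \<Rightarrow> real \<Rightarrow> ('s \<Rightarrow> real^'a) \<Rightarrow> 's \<Rightarrow> 's \<Rightarrow> real" where
  "kappa P \<gamma> \<pi> s q = (1 - \<gamma>) * (\<Sum>t. \<gamma> ^ t * Prob_state P \<pi> t s q)"

definition is_subgrad_simplex :: "(real^'a::finite \<Rightarrow> real) \<Rightarrow> real^'a \<Rightarrow> real^'a \<Rightarrow> bool" where
  "is_subgrad_simplex f p' g \<longleftrightarrow> (\<forall>p\<in>prob_simplex. f p \<ge> f p' + g \<bullet> (p - p'))"

definition pmd_step :: "('s::finite \<Rightarrow> 'a::finite \<Rightarrow> 's \<Rightarrow> real) \<Rightarrow> ('s \<Rightarrow> 'a \<Rightarrow> real) \<Rightarrow> (real^'a \<Rightarrow> 's \<Rightarrow> real) \<Rightarrow> real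
     \<Rightarrow> (real^'a \<Rightarrow> real) \<Rightarrow> (real^'a \<Rightarrow> real^'a) \<Rightarrow> real \<Rightarrow> ('s \<Rightarrow> real^'a) \<Rightarrow> ('s \<Rightarrow> real^'a) \<Rightarrow> bool" where
  "pmd_step P c h \<gamma> \<omega> gw \<eta> \<pi> \<pi>' \<longleftrightarrow>
     (\<forall>s. is_arg_min (\<lambda>p. \<eta> * ((\<Sum>a\<in>UNIV. Qf P c h \<gamma> \<pi> s a * p $ a) + h p s) + bregman \<omega> gw p (\<pi> s))
                     (\<lambda>p. p \<in> prob_simplex) (\<pi>' s))"

end

theory Submission
  imports Defs
begin


lemma simplex_comb:
  assumes "p \<in> prob_simplex" "q \<in> prob_simplex" "0 \<le> l" "l \<le> 1"
  shows "p + l *\<^sub>R (q - p) \<in> prob_simplex"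
proof -
  have "\<forall>a. 0 \<le> (p + l *\<^sub>R (q - p)) $ a"
  proof
    fix a
    have "0 \<le> p$a" "0 \<le> q$a" using assms unfolding prob_simplex_def by auto
    then have "0 \<le> (1-l) * p$a + l * q$a" using assms by (simp add: mult_nonneg_nonneg)
    then show "0 \<le> (p + l *\<^sub>R (q - p)) $ a" by (simp add: algebra_simps)
  qed
  moreover have "(\<Sum>a\<in>UNIV. (p + l *\<^sub>R (q - p)) $ a) = 1"
  proof -
    have "(\<Sum>a\<in>UNIV. (p + l *\<^sub>R (q - p)) $ a) = (\<Sum>a\<in>UNIV. p$a) + l * ((\<Sum>a\<in>UNIV. q$a) - (\<Sum>a\<in>UNIV. p$a))"
      by (simp add: sum.distrib sum_distrib_left sum_subtractf algebra_simps)
    then show ?thesis using assms unfolding prob_simplex_def by simp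
  qed
  ultimately show ?thesis unfolding prob_simplex_def by simp
qed

lemma dir_deriv:
  fixes \<omega> :: "real^'a::finite \<Rightarrow> real"
  assumes "(\<omega> has_derivative (\<lambda>v. gw p \<bullet> v)) (at p)"
  shows "((\<lambda>l. (\<omega> (p + l *\<^sub>R (q - p)) - \<omega> p) / l) \<longlongrightarrow> gw p \<bullet> (q - p)) (at_right 0)"
proof -
  have f: "((\<lambda>l::real. p + l *\<^sub>R (q - p)) has_derivative (\<lambda>l. l *\<^sub>R (q - p))) (at 0)"
    by (auto intro!: derivative_eq_intros)
  have g: "(\<omega> has_derivative (\<lambda>v. gw p \<bullet> v)) (at (p + 0 *\<^sub>R (q - p)))" using assms by simp
  have "((\<omega> \<circ> (\<lambda>l::real. p + l *\<^sub>R (q - p))) has_derivative ((\<lambda>v. gw p \<bullet> v) \<circ> (\<lambda>l. l *\<^sub>R (q - p)))) (at 0)"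
    by (rule diff_chain_at[OF f g])
  moreover have "((\<lambda>v. gw p \<bullet> v) \<circ> (\<lambda>l. l *\<^sub>R (q - p))) = (*) (gw p \<bullet> (q - p))"
    by (auto simp: fun_eq_iff)
  ultimately have "((\<lambda>l. \<omega> (p + l *\<^sub>R (q - p))) has_field_derivative (gw p \<bullet> (q - p))) (at 0)"
    by (simp add: has_field_derivative_def o_def)
  then have "((\<lambda>l. \<omega> (p + l *\<^sub>R (q - p))) has_field_derivative (gw p \<bullet> (q - p))) (at 0 within {0<..})"
    by (rule has_field_derivative_at_within)
  then show ?thesis unfolding has_field_derivative_iff by simp
qed

lemma dir_deriv_ge:
  assumes "(f \<longlongrightarrow> (d::real)) (at_right (0::real))" "\<And>l. 0 < l \<Longrightarrow> l \<le> 1 \<Longrightarrow> C \<le> f l"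
  shows "C \<le> d"
proof (rule tendsto_lowerbound[OF assms(1)])
  have "\<exists>b>(0::real). \<forall>y>0. y < b \<longrightarrow> C \<le> f y"
    using assms(2) by (intro exI[of _ 1]) auto
  then show "\<forall>\<^sub>F x in at_right 0. C \<le> f x"
    using eventually_at_right_field[of "\<lambda>x. C \<le> f x" "0::real"] by simp
qed simp

lemma dir_deriv_le:
  assumes "(f \<longlongrightarrow> (d::real)) (at_right (0::real))" "\<And>l. 0 < l \<Longrightarrow> l \<le> 1 \<Longrightarrow> f l \<le> C"
  shows "d \<le> C"
proof (rule tendsto_upperbound[OF assms(1)])
  have "\<exists>b>(0::real). \<forall>y>0. y < b \<longrightarrow> f y \<le> C"
    using assms(2) by (intro exI[of _ 1]) auto
  then show "\<forall>\<^sub>F x in at_right 0. f x \<le> C"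
    using eventually_at_right_field[of "\<lambda>x. f x \<le> C" "0::real"] by simp
qed simp

lemma bregman_nonneg:
  fixes \<omega> :: "real^'a::finite \<Rightarrow> real"
  assumes "(\<omega> has_derivative (\<lambda>v. gw p \<bullet> v)) (at p)" "convex_on prob_simplex \<omega>"
    "p \<in> prob_simplex" "q \<in> prob_simplex"
  shows "0 \<le> bregman \<omega> gw q p"
proof -
  have "gw p \<bullet> (q - p) \<le> \<omega> q - \<omega> p"
  proof (rule dir_deriv_le[OF dir_deriv[of \<omega> gw p q, OF assms(1)]])
    fix l :: real assume l: "0 < l" "l \<le> 1"
    have "\<omega> ((1 - l) *\<^sub>R p + l *\<^sub>R q) \<le> (1 - l) * \<omega> p + l * \<omega> q"
      using convex_onD[OF assms(2)] l assms(3,4) by simp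
    moreover have "(1 - l) *\<^sub>R p + l *\<^sub>R q = p + l *\<^sub>R (q - p)" by (simp add: algebra_simps)
    ultimately have "\<omega> (p + l *\<^sub>R (q - p)) - \<omega> p \<le> l * (\<omega> q - \<omega> p)" by (simp add: algebra_simps)
    then show "(\<omega> (p + l *\<^sub>R (q - p)) - \<omega> p) / l \<le> \<omega> q - \<omega> p" using l by (simp add: divide_le_eq mult.commute)
  qed
  then show ?thesis unfolding bregman_def by simp
qed

lemma three_point:
  fixes \<omega> :: "real^'a::finite \<Rightarrow> real" and L :: "real^'a \<Rightarrow> real"
  assumes amin: "is_arg_min (\<lambda>p. \<eta> * L p + bregman \<omega> gw p p0) (\<lambda>p. p \<in> prob_simplex) pp"
    and Lc: "convex_on prob_simplex L"
    and dw: "(\<omega> has_derivative (\<lambda>v. gw pp \<bullet> v)) (at pp)"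
    and eta: "0 \<le> \<eta>" and p: "p \<in> prob_simplex"
  shows "\<eta> * (L pp - L p) + bregman \<omega> gw pp p0 + bregman \<omega> gw p pp \<le> bregman \<omega> gw p p0"
proof -
  have pp: "pp \<in> prob_simplex" using amin by (simp add: is_arg_min_def)
  have key: "gw p0 \<bullet> (p - pp) - \<eta> * (L p - L pp) \<le> gw pp \<bullet> (p - pp)"
  proof (rule dir_deriv_ge[OF dir_deriv[of \<omega> gw pp p, OF dw]])
    fix l :: real assume l: "0 < l" "l \<le> 1"
    define pl where "pl = pp + l *\<^sub>R (p - pp)"
    have plS: "pl \<in> prob_simplex" unfolding pl_def using simplex_comb[OF pp p] l by simp
    have "\<not> (\<eta> * L pl + bregman \<omega> gw pl p0 < \<eta> * L pp + bregman \<omega> gw pp p0)"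
      using amin plS unfolding is_arg_min_def by blast
    then have A: "\<eta> * L pp + bregman \<omega> gw pp p0 \<le> \<eta> * L pl + bregman \<omega> gw pl p0" by simp
    have "L ((1 - l) *\<^sub>R pp + l *\<^sub>R p) \<le> (1 - l) * L pp + l * L p"
      using convex_onD[OF Lc] l pp p by simp
    moreover have "(1 - l) *\<^sub>R pp + l *\<^sub>R p = pl" unfolding pl_def by (simp add: algebra_simps)
    ultimately have B: "L pl - L pp \<le> l * (L p - L pp)" by (simp add: algebra_simps)
    have B2: "\<eta> * (L pl - L pp) \<le> \<eta> * (l * (L p - L pp))" using mult_left_mono[OF B eta] .
    have C: "bregman \<omega> gw pl p0 - bregman \<omega> gw pp p0 = \<omega> pl - \<omega> pp - l * (gw p0 \<bullet> (p - pp))"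
      unfolding bregman_def pl_def by (simp add: inner_diff_right inner_add_right algebra_simps)
    from A B2 C have "l * (gw p0 \<bullet> (p - pp) - \<eta> * (L p - L pp)) \<le> \<omega> pl - \<omega> pp"
      by (simp add: algebra_simps)
    then show "gw p0 \<bullet> (p - pp) - \<eta> * (L p - L pp) \<le> (\<omega> (pp + l *\<^sub>R (p - pp)) - \<omega> pp) / l"
      using l unfolding pl_def by (simp add: le_divide_eq mult.commute)
  qed
  have "bregman \<omega> gw p p0 - bregman \<omega> gw p pp - bregman \<omega> gw pp p0 = gw pp \<bullet> (p - pp) - gw p0 \<bullet> (p - pp)"
    unfolding bregman_def by (simp add: inner_diff_right algebra_simps)
  with key show ?thesis by (simp add: algebra_simps)
qed



lemma state_dist_lin:
  "state_dist P \<pi> (\<lambda>r. \<Sum>i\<in>I. w i * \<nu> i r) t q = (\<Sum>i\<in>I. w i * state_dist P \<pi> (\<nu> i) t q)"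
proof (induction t arbitrary: q)
  case 0 then show ?case by simp
next
  case (Suc t)
  have "state_dist P \<pi> (\<lambda>r. \<Sum>i\<in>I. w i * \<nu> i r) (Suc t) q
     = (\<Sum>r\<in>UNIV. (\<Sum>i\<in>I. w i * state_dist P \<pi> (\<nu> i) t r) * Ppol P \<pi> r q)" by (simp add: Suc)
  also have "\<dots> = (\<Sum>i\<in>I. w i * (\<Sum>r\<in>UNIV. state_dist P \<pi> (\<nu> i) t r * Ppol P \<pi> r q))"
    by (simp add: sum_distrib_right sum_distrib_left mult.assoc, rule sum.swap)
  finally show ?case by simp
qed

lemma delta_mult: "(if a = b then 1 else 0) * (y::real) = (if a = b then y else 0)" by simp

lemma state_dist_Suc':
  "state_dist P \<pi> \<mu> (Suc t) q = state_dist P \<pi> (\<lambda>r. \<Sum>r'\<in>UNIV. \<mu> r' * Ppol P \<pi> r' r) t q"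
proof (induction t arbitrary: q)
  case 0 then show ?case by simp
next
  case (Suc t)
  show ?case by (subst state_dist.simps(2), subst Suc) simp
qed

lemma Prob_Suc:
  "Prob_state P \<pi> (Suc t) s q = (\<Sum>r\<in>UNIV. Ppol P \<pi> s r * Prob_state P \<pi> t r q)"
proof -
  have "Prob_state P \<pi> (Suc t) s q = state_dist P \<pi> (\<lambda>r. Ppol P \<pi> s r) t q"
    unfolding Prob_state_def by (subst state_dist_Suc') (simp add: delta_mult)
  also have "(\<lambda>r. Ppol P \<pi> s r) = (\<lambda>r. \<Sum>r'\<in>UNIV. Ppol P \<pi> s r' * (if r = r' then 1 else 0))"
    by (rule ext) (simp add: if_distrib[of "\<lambda>x. _ * x"] cong: if_cong)
  finally show ?thesis unfolding Prob_state_def by (simp add: state_dist_lin)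
qed

lemma summable_geom_bounded:
  fixes \<gamma> :: real
  assumes "0 \<le> \<gamma>" "\<gamma> < 1" "\<And>t. \<bar>x t\<bar> \<le> B"
  shows "summable (\<lambda>t. \<gamma> ^ t * x t)"
proof (rule summable_comparison_test[of _ "\<lambda>t. B * \<gamma> ^ t"])
  show "\<exists>N. \<forall>n\<ge>N. norm (\<gamma> ^ n * x n) \<le> B * \<gamma> ^ n"
    using assms by (auto simp: abs_mult mult.commute intro!: mult_right_mono)
  show "summable (\<lambda>t. B * \<gamma> ^ t)" using assms by (intro summable_mult summable_geometric) simp
qed

locale mdp =
  fixes P :: "'s::finite \<Rightarrow> 'a::finite \<Rightarrow> 's \<Rightarrow> real" and \<gamma> :: real
  assumes P_nonneg: "\<And>s a s'. 0 \<le> P s a s'"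
    and P_sum: "\<And>s a. (\<Sum>s'\<in>UNIV. P s a s') = 1"
    and g0: "0 \<le> \<gamma>" and g1: "\<gamma> < 1"
begin

lemma Ppol_nonneg: "is_policy \<pi> \<Longrightarrow> 0 \<le> Ppol P \<pi> r q"
  unfolding Ppol_def is_policy_def prob_simplex_def by (auto intro!: sum_nonneg simp: P_nonneg)

lemma Ppol_sum: "is_policy \<pi> \<Longrightarrow> (\<Sum>q\<in>UNIV. Ppol P \<pi> r q) = 1"
  unfolding Ppol_def is_policy_def prob_simplex_def
  by (subst sum.swap) (simp add: sum_distrib_left[symmetric] P_sum)

lemma state_dist_nonneg: "is_policy \<pi> \<Longrightarrow> (\<And>r. 0 \<le> \<mu> r) \<Longrightarrow> 0 \<le> state_dist P \<pi> \<mu> t q"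
  by (induction t arbitrary: q) (auto intro!: sum_nonneg mult_nonneg_nonneg Ppol_nonneg)

lemma state_dist_sum: "is_policy \<pi> \<Longrightarrow> (\<Sum>q\<in>UNIV. state_dist P \<pi> \<mu> t q) = (\<Sum>q\<in>UNIV. \<mu> q)"
proof (induction t)
  case 0 then show ?case by simp
next
  case (Suc t)
  have "(\<Sum>q\<in>UNIV. state_dist P \<pi> \<mu> (Suc t) q) = (\<Sum>r\<in>UNIV. state_dist P \<pi> \<mu> t r * (\<Sum>q\<in>UNIV. Ppol P \<pi> r q))"
    unfolding state_dist.simps by (subst sum.swap) (simp add: sum_distrib_left)
  also have "\<dots> = (\<Sum>r\<in>UNIV. state_dist P \<pi> \<mu> t r)" using Ppol_sum[OF Suc.prems] by simp
  finally show ?case using Suc by simp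
qed

lemma Prob_nonneg: "is_policy \<pi> \<Longrightarrow> 0 \<le> Prob_state P \<pi> t s q"
  unfolding Prob_state_def by (rule state_dist_nonneg) auto

lemma Prob_sum: "is_policy \<pi> \<Longrightarrow> (\<Sum>q\<in>UNIV. Prob_state P \<pi> t s q) = 1"
  unfolding Prob_state_def by (simp add: state_dist_sum)

lemma Prob_le1: "is_policy \<pi> \<Longrightarrow> Prob_state P \<pi> t s q \<le> 1"
proof -
  assume pol: "is_policy \<pi>"
  have "Prob_state P \<pi> t s q \<le> (\<Sum>q\<in>UNIV. Prob_state P \<pi> t s q)"
    by (rule member_le_sum) (auto simp: Prob_nonneg[OF pol])
  then show ?thesis using Prob_sum[OF pol] by simp
qed

lemma summ: "(\<And>t. \<bar>x t\<bar> \<le> B) \<Longrightarrow> summable (\<lambda>t. \<gamma> ^ t * x t)"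
  using summable_geom_bounded[OF g0 g1] by blast

lemma summ_Prob: "is_policy \<pi> \<Longrightarrow> summable (\<lambda>t. \<gamma> ^ t * (Prob_state P \<pi> t s q * y))"
  by (rule summ[where B="\<bar>y\<bar>"]) (auto simp: abs_mult Prob_nonneg Prob_le1 intro!: mult_left_le_one_le)

end



lemma delta_mult2: "(y::real) * (if a = b then 1 else 0) = (if a = b then y else 0)" by simp

lemma state_dist_lin': "\<mu> = (\<lambda>r. \<Sum>i\<in>I. w i * \<nu> i r) \<Longrightarrow>
  state_dist P \<pi> \<mu> t q = (\<Sum>i\<in>I. w i * state_dist P \<pi> (\<nu> i) t q)"
  by (simp add: state_dist_lin)

context mdp begin

definition K where "K \<pi> s q = (\<Sum>t. \<gamma> ^ t * Prob_state P \<pi> t s q)"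

lemma summ_P1: "is_policy \<pi> \<Longrightarrow> summable (\<lambda>t. \<gamma> ^ t * Prob_state P \<pi> t s q)"
  using summ_Prob[of \<pi> s q 1] by simp

lemma summ_V: "is_policy \<pi> \<Longrightarrow> summable (\<lambda>t. \<gamma> ^ t * (\<Sum>q\<in>UNIV. Prob_state P \<pi> t s q * y q))"
proof (rule summ[where B="\<Sum>q\<in>UNIV. \<bar>y q\<bar>"])
  fix t assume pol: "is_policy \<pi>"
  have "\<bar>\<Sum>q\<in>UNIV. Prob_state P \<pi> t s q * y q\<bar> \<le> (\<Sum>q\<in>UNIV. \<bar>Prob_state P \<pi> t s q * y q\<bar>)"
    by (rule sum_abs)
  also have "\<dots> \<le> (\<Sum>q\<in>UNIV. \<bar>y q\<bar>)"
    by (rule sum_mono) (auto simp: abs_mult Prob_nonneg[OF pol] Prob_le1[OF pol] intro!: mult_left_le_one_le)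
  finally show "\<bar>\<Sum>q\<in>UNIV. Prob_state P \<pi> t s q * y q\<bar> \<le> (\<Sum>q\<in>UNIV. \<bar>y q\<bar>)" .
qed

lemma K_nonneg: "is_policy \<pi> \<Longrightarrow> 0 \<le> K \<pi> s q"
  unfolding K_def by (rule suminf_nonneg[OF summ_P1]) (auto intro!: mult_nonneg_nonneg Prob_nonneg g0 zero_le_power)

lemma K_bellman:
  assumes pol: "is_policy \<pi>"
  shows "K \<pi> s q = (if s = q then 1 else 0) + \<gamma> * (\<Sum>r\<in>UNIV. Ppol P \<pi> s r * K \<pi> r q)"
proof -
  let ?f = "\<lambda>t. \<gamma> ^ t * Prob_state P \<pi> t s q"
  have "K \<pi> s q = ?f 0 + (\<Sum>t. ?f (Suc t))"
    unfolding K_def using suminf_split_head[OF summ_P1[OF pol]] by simp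
  also have "?f 0 = (if s = q then 1 else 0)" by (simp add: Prob_state_def)
  also have "(\<Sum>t. ?f (Suc t)) = (\<Sum>t. \<Sum>r\<in>UNIV. \<gamma> * Ppol P \<pi> s r * (\<gamma> ^ t * Prob_state P \<pi> t r q))"
    by (simp add: Prob_Suc sum_distrib_left mult_ac)
  also have "\<dots> = (\<Sum>r\<in>UNIV. \<Sum>t. \<gamma> * Ppol P \<pi> s r * (\<gamma> ^ t * Prob_state P \<pi> t r q))"
    by (rule suminf_sum) (intro summable_mult summ_P1 pol)
  also have "\<dots> = (\<Sum>r\<in>UNIV. \<gamma> * Ppol P \<pi> s r * K \<pi> r q)"
    unfolding K_def by (intro sum.cong refl suminf_mult summ_P1 pol)
  finally show ?thesis by (simp add: sum_distrib_left mult_ac)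
qed

lemma K_diag: "is_policy \<pi> \<Longrightarrow> 1 \<le> K \<pi> s s"
  by (subst K_bellman) (auto intro!: mult_nonneg_nonneg sum_nonneg Ppol_nonneg K_nonneg g0)

lemma K_sum: assumes pol: "is_policy \<pi>" shows "(\<Sum>q\<in>UNIV. K \<pi> s q) = 1 / (1 - \<gamma>)"
proof -
  have "(\<Sum>q\<in>UNIV. K \<pi> s q) = (\<Sum>t. \<Sum>q\<in>UNIV. \<gamma> ^ t * Prob_state P \<pi> t s q)"
    unfolding K_def by (rule suminf_sum[symmetric]) (rule summ_P1[OF pol])
  also have "\<dots> = (\<Sum>t. \<gamma> ^ t)" by (simp add: sum_distrib_left[symmetric] Prob_sum[OF pol])
  also have "\<dots> = 1 / (1 - \<gamma>)" using suminf_geometric[of \<gamma>] g0 g1 by simp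
  finally show ?thesis .
qed

lemma Kf: assumes pol: "is_policy \<pi>"
  shows "(\<Sum>q\<in>UNIV. K \<pi> s q * f q) = f s + \<gamma> * (\<Sum>r\<in>UNIV. Ppol P \<pi> s r * (\<Sum>q\<in>UNIV. K \<pi> r q * f q))"
proof -
  have "(\<Sum>q\<in>UNIV. K \<pi> s q * f q) = (\<Sum>q\<in>UNIV. (if s = q then f q else 0) + \<gamma> * (\<Sum>r\<in>UNIV. Ppol P \<pi> s r * K \<pi> r q * f q))"
    by (subst K_bellman[OF pol]) (simp add: algebra_simps sum_distrib_left sum_distrib_right delta_mult2)
  also have "\<dots> = f s + \<gamma> * (\<Sum>q\<in>UNIV. \<Sum>r\<in>UNIV. Ppol P \<pi> s r * K \<pi> r q * f q)"
    by (simp add: sum.distrib sum_distrib_left)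
  also have "(\<Sum>q\<in>UNIV. \<Sum>r\<in>UNIV. Ppol P \<pi> s r * K \<pi> r q * f q) = (\<Sum>r\<in>UNIV. Ppol P \<pi> s r * (\<Sum>q\<in>UNIV. K \<pi> r q * f q))"
    by (subst sum.swap) (simp add: sum_distrib_left mult_ac)
  finally show ?thesis .
qed

lemma bell_unique:
  assumes pol: "is_policy \<pi>"
    and g: "\<And>s. g s = f s + \<gamma> * (\<Sum>r\<in>UNIV. Ppol P \<pi> s r * g r)"
    and g': "\<And>s. g' s = f s + \<gamma> * (\<Sum>r\<in>UNIV. Ppol P \<pi> s r * g' r)"
  shows "g s = g' s"
proof -
  define d where "d s = g s - g' s" for s
  have d: "d s = \<gamma> * (\<Sum>r\<in>UNIV. Ppol P \<pi> s r * d r)" for s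
    unfolding d_def by (subst g, subst g') (simp add: algebra_simps sum_subtractf)
  define m where "m = Max (range (\<lambda>s. \<bar>d s\<bar>))"
  have dm: "\<bar>d s\<bar> \<le> m" for s unfolding m_def by (rule Max_ge) auto
  have "\<bar>d s\<bar> \<le> \<gamma> * m" for s
  proof -
    have "\<bar>d s\<bar> = \<gamma> * \<bar>\<Sum>r\<in>UNIV. Ppol P \<pi> s r * d r\<bar>" using g0 by (subst d) (simp add: abs_mult)
    also have "\<bar>\<Sum>r\<in>UNIV. Ppol P \<pi> s r * d r\<bar> \<le> (\<Sum>r\<in>UNIV. Ppol P \<pi> s r * m)"
      using sum_abs[of "\<lambda>r. Ppol P \<pi> s r * d r" UNIV]
        sum_mono[of UNIV "\<lambda>r. \<bar>Ppol P \<pi> s r * d r\<bar>" "\<lambda>r. Ppol P \<pi> s r * m"]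
        by (force simp: abs_mult Ppol_nonneg[OF pol] intro: mult_left_mono dm)
    also have "\<dots> = m" using Ppol_sum[OF pol] by (simp add: sum_distrib_right[symmetric])
    finally show ?thesis using g0 by (simp add: mult_left_mono)
  qed
  then have "m \<le> \<gamma> * m" unfolding m_def by (intro Max.boundedI) auto
  moreover have "0 \<le> m" using dm[of s] by simp
  ultimately have "m = 0" using g1 by (smt (verit) mult_le_cancel_right1)
  then show ?thesis using dm[of s] unfolding d_def by simp
qed

lemma Vf_K: assumes pol: "is_policy \<pi>"
  shows "Vf P c h \<gamma> \<pi> s = (\<Sum>q\<in>UNIV. K \<pi> s q * stage_cost c h \<pi> q)"
proof -
  have "Vf P c h \<gamma> \<pi> s = (\<Sum>t. \<Sum>q\<in>UNIV. \<gamma> ^ t * (Prob_state P \<pi> t s q * stage_cost c h \<pi> q))"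
    unfolding Vf_def by (simp add: sum_distrib_left)
  also have "\<dots> = (\<Sum>q\<in>UNIV. \<Sum>t. \<gamma> ^ t * (Prob_state P \<pi> t s q * stage_cost c h \<pi> q))"
    by (rule suminf_sum) (rule summ_Prob[OF pol])
  also have "\<dots> = (\<Sum>q\<in>UNIV. K \<pi> s q * stage_cost c h \<pi> q)"
    unfolding K_def by (intro sum.cong refl, subst suminf_mult2[OF summ_P1[OF pol]]) (simp add: mult_ac)
  finally show ?thesis .
qed

lemma V_bellman: "is_policy \<pi> \<Longrightarrow>
  Vf P c h \<gamma> \<pi> s = stage_cost c h \<pi> s + \<gamma> * (\<Sum>r\<in>UNIV. Ppol P \<pi> s r * Vf P c h \<gamma> \<pi> r)"
  by (simp add: Vf_K Kf[of \<pi> s "stage_cost c h \<pi>"])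

lemma state_dist_P: "state_dist P \<pi> (P s a) t q = (\<Sum>i\<in>UNIV. P s a i * Prob_state P \<pi> t i q)"
proof -
  have "P s a = (\<lambda>r. \<Sum>i\<in>UNIV. P s a i * (if r = i then 1 else 0))"
    by (rule ext) (simp add: if_distrib[of "\<lambda>x. _ * x"] cong: if_cong)
  then show ?thesis unfolding Prob_state_def by (rule state_dist_lin')
qed

lemma Q_formula: assumes pol: "is_policy \<pi>"
  shows "Qf P c h \<gamma> \<pi> s a = c s a + h (\<pi> s) s + \<gamma> * (\<Sum>i\<in>UNIV. P s a i * Vf P c h \<gamma> \<pi> i)"
proof -
  let ?r = "stage_cost c h \<pi>"
  have "(\<Sum>t. \<gamma> ^ Suc t * (\<Sum>q\<in>UNIV. state_dist P \<pi> (P s a) t q * ?r q))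
      = (\<Sum>t. \<Sum>i\<in>UNIV. \<gamma> * P s a i * (\<gamma> ^ t * (\<Sum>q\<in>UNIV. Prob_state P \<pi> t i q * ?r q)))"
    by (simp add: state_dist_P sum_distrib_left sum_distrib_right mult_ac, subst sum.swap, simp)
  also have "\<dots> = (\<Sum>i\<in>UNIV. \<Sum>t. \<gamma> * P s a i * (\<gamma> ^ t * (\<Sum>q\<in>UNIV. Prob_state P \<pi> t i q * ?r q)))"
    by (rule suminf_sum) (intro summable_mult summ_V pol)
  also have "\<dots> = (\<Sum>i\<in>UNIV. \<gamma> * P s a i * Vf P c h \<gamma> \<pi> i)"
    unfolding Vf_def by (intro sum.cong refl suminf_mult summ_V pol)
  finally show ?thesis unfolding Qf_def by (simp add: sum_distrib_left mult_ac)
qed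

end



lemma convex_lin: "convex S \<Longrightarrow> convex_on S (\<lambda>p::real^'a::finite. \<Sum>a\<in>UNIV. Q a * p $ a)"
  unfolding convex_on_def
  by (simp add: sum.distrib sum_distrib_left algebra_simps)

context mdp begin

definition adv where
  "adv c h \<pi> \<pi>' q = (\<Sum>a\<in>UNIV. Qf P c h \<gamma> \<pi> q a * \<pi>' q $ a) + h (\<pi>' q) q - h (\<pi> q) q - Vf P c h \<gamma> \<pi> q"

lemma adv_eq:
  assumes pol: "is_policy \<pi>" and pol': "is_policy \<pi>'"
  shows "adv c h \<pi> \<pi>' q = stage_cost c h \<pi>' q + \<gamma> * (\<Sum>r\<in>UNIV. Ppol P \<pi>' q r * Vf P c h \<gamma> \<pi> r) - Vf P c h \<gamma> \<pi> q"
proof -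
  let ?V = "Vf P c h \<gamma> \<pi>"
  have s1: "(\<Sum>a\<in>UNIV. \<pi>' q $ a) = 1" using pol' unfolding is_policy_def prob_simplex_def by simp
  have "(\<Sum>a\<in>UNIV. Qf P c h \<gamma> \<pi> q a * \<pi>' q $ a)
      = (\<Sum>a\<in>UNIV. \<pi>' q $ a * c q a) + h (\<pi> q) q * (\<Sum>a\<in>UNIV. \<pi>' q $ a)
        + \<gamma> * (\<Sum>a\<in>UNIV. \<Sum>i\<in>UNIV. \<pi>' q $ a * P q a i * ?V i)"
    by (simp add: Q_formula[OF pol] algebra_simps sum.distrib sum_distrib_left)
  also have "(\<Sum>a\<in>UNIV. \<Sum>i\<in>UNIV. \<pi>' q $ a * P q a i * ?V i) = (\<Sum>r\<in>UNIV. Ppol P \<pi>' q r * ?V r)"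
    unfolding Ppol_def by (subst sum.swap) (simp add: sum_distrib_right)
  finally show ?thesis unfolding adv_def stage_cost_def using s1 by simp
qed

lemma adv_self: "is_policy \<pi> \<Longrightarrow> adv c h \<pi> \<pi> q = 0"
  by (simp add: adv_eq V_bellman[symmetric])

lemma PDL:
  assumes pol: "is_policy \<pi>" and pol': "is_policy \<pi>'"
  shows "Vf P c h \<gamma> \<pi>' s - Vf P c h \<gamma> \<pi> s = (\<Sum>q\<in>UNIV. K \<pi>' s q * adv c h \<pi> \<pi>' q)"
proof -
  let ?V = "Vf P c h \<gamma> \<pi>" and ?V' = "Vf P c h \<gamma> \<pi>'"
  let ?f = "adv c h \<pi> \<pi>'"
  show ?thesis
  proof (rule bell_unique[OF pol', of "\<lambda>s. ?V' s - ?V s" ?f])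
    fix s
    show "?V' s - ?V s = ?f s + \<gamma> * (\<Sum>r\<in>UNIV. Ppol P \<pi>' s r * (?V' r - ?V r))"
      by (subst V_bellman[OF pol'], simp add: adv_eq[OF pol pol'] algebra_simps sum_subtractf)
  next
    fix s
    show "(\<Sum>q\<in>UNIV. K \<pi>' s q * ?f q) = ?f s + \<gamma> * (\<Sum>r\<in>UNIV. Ppol P \<pi>' s r * (\<Sum>q\<in>UNIV. K \<pi>' r q * ?f q))"
      by (rule Kf[OF pol'])
  qed
qed

end



lemma arith1: "0 < (e::real) \<Longrightarrow> (1 - g) * (e * X + Y) = (1 - g) * e * (X + Y / e)"
  by (simp add: algebra_simps)

lemma arith2: "S = (1 - g) * e * G \<Longrightarrow> 0 < (e::real) \<Longrightarrow> g < 1 \<Longrightarrow> 1 \<le> k \<Longrightarrow> real k * D \<le> G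
   \<Longrightarrow> D \<le> S / (e * (1 - g) * real k)"
  by (simp add: mult_ac pos_le_divide_eq mult.commute)

theorem theorem3p3:
  fixes P :: "'s::finite \<Rightarrow> 'a::finite \<Rightarrow> 's \<Rightarrow> real"
    and c :: "'s \<Rightarrow> 'a \<Rightarrow> real"
    and \<gamma> :: real
    and \<omega> :: "real^'a \<Rightarrow> real"
    and gw :: "real^'a \<Rightarrow> real^'a"
    and h :: "real^'a \<Rightarrow> 's \<Rightarrow> real"
    and \<mu>h :: real
    and \<pi>opt :: "'s \<Rightarrow> real^'a"
    and \<pi> :: "nat \<Rightarrow> 's \<Rightarrow> real^'a"
    and \<eta> :: "nat \<Rightarrow> real"
    and k :: nat and s :: 's
  assumes P_nonneg: "\<And>s a s'. 0 \<le> P s a s'"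
    and P_sum: "\<And>s a. (\<Sum>s'\<in>UNIV. P s a s') = 1"
    and gamma: "0 \<le> \<gamma>" "\<gamma> < 1"
    and omega_diff: "\<And>p. p \<in> prob_simplex \<Longrightarrow> (\<omega> has_derivative (\<lambda>v. gw p \<bullet> v)) (at p)"
    and omega_convex: "convex_on prob_simplex \<omega>"
    and h_convex: "\<And>s. convex_on prob_simplex (\<lambda>p. h p s)"
    and h_closed: "\<And>s. closed {(p, t). p \<in> prob_simplex \<and> h p s \<le> t}"
    and mu_h: "0 \<le> \<mu>h"
    and h_strong: "\<And>s p p' g. p \<in> prob_simplex \<Longrightarrow> p' \<in> prob_simplex \<Longrightarrow> is_subgrad_simplex (\<lambda>x. h x s) p' g \<Longrightarrow>
                     h p s - h p' s - g \<bullet> (p - p') \<ge> \<mu>h * bregman \<omega> gw p p'"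
    and opt_policy: "is_policy \<pi>opt"
    and opt: "\<And>\<pi>' s. is_policy \<pi>' \<Longrightarrow> Vf P c h \<gamma> \<pi>opt s \<le> Vf P c h \<gamma> \<pi>' s"
    and init: "is_policy (\<pi> 0)"
    and pmd: "\<And>t. pmd_step P c h \<gamma> \<omega> gw (\<eta> t) (\<pi> t) (\<pi> (Suc t))"
    and eta_pos: "\<And>t. 0 < \<eta> t"
    and eta_mono: "mono \<eta>"
    and k: "1 \<le> k"
  shows "Vf P c h \<gamma> (\<pi> k) s - Vf P c h \<gamma> \<pi>opt s
    \<le> (\<Sum>q\<in>UNIV. kappa P \<gamma> \<pi>opt s q *
          (\<eta> 0 * (Vf P c h \<gamma> (\<pi> 0) q - Vf P c h \<gamma> \<pi>opt q) + Dpol \<omega> gw \<pi>opt (\<pi> 0) q))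
       / (\<eta> 0 * (1 - \<gamma>) * real k)"
proof -
  interpret mdp P \<gamma> using P_nonneg P_sum gamma by unfold_locales auto
  have cvx: "convex (prob_simplex :: (real^'a) set)" using h_convex[of s] unfolding convex_on_def by (rule conjunct1)
  have pol: "is_policy (\<pi> t)" for t
  proof (induction t)
    case 0 show ?case by (rule init)
  next
    case (Suc t) show ?case using pmd[of t] unfolding pmd_step_def is_arg_min_def is_policy_def by blast
  qed
  have inS: "\<pi> t q \<in> prob_simplex" for t q using pol[of t] unfolding is_policy_def by blast
  have inSo: "\<pi>opt q \<in> prob_simplex" for q using opt_policy unfolding is_policy_def by blast
  define V where "V t q = Vf P c h \<gamma> (\<pi> t) q" for t q
  define Vs where "Vs q = Vf P c h \<gamma> \<pi>opt q" for q
  define D where "D t q = bregman \<omega> gw (\<pi>opt q) (\<pi> t q)" for t q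
  define A where "A t q = adv c h (\<pi> t) (\<pi> (Suc t)) q" for t q
  define As where "As t q = adv c h (\<pi> t) \<pi>opt q" for t q
  define L where "L t q p = (\<Sum>a\<in>UNIV. Qf P c h \<gamma> (\<pi> t) q a * p $ a) + h p q" for t q p
  have Dnn: "0 \<le> D t q" for t q
    unfolding D_def by (rule bregman_nonneg[of \<omega> gw "\<pi> t q" "\<pi>opt q", OF omega_diff[OF inS] omega_convex inS inSo])
  have Bnn: "0 \<le> bregman \<omega> gw p (\<pi> t q)" if "p \<in> prob_simplex" for p t q
    by (rule bregman_nonneg[of \<omega> gw "\<pi> t q" p, OF omega_diff[OF inS] omega_convex inS that])
  have tp: "\<eta> t * (L t q (\<pi> (Suc t) q) - L t q p) + bregman \<omega> gw (\<pi> (Suc t) q) (\<pi> t q)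
      + bregman \<omega> gw p (\<pi> (Suc t) q) \<le> bregman \<omega> gw p (\<pi> t q)" if p: "p \<in> prob_simplex" for t q p
  proof -
    have amin: "is_arg_min (\<lambda>p. \<eta> t * L t q p + bregman \<omega> gw p (\<pi> t q)) (\<lambda>p. p \<in> prob_simplex) (\<pi> (Suc t) q)"
      using pmd[of t] unfolding pmd_step_def L_def by blast
    have Lc: "convex_on prob_simplex (L t q)"
      unfolding L_def by (intro convex_on_add convex_lin cvx h_convex)
    show ?thesis
      by (rule three_point[OF amin Lc omega_diff[OF inS[of "Suc t" q]] less_imp_le[OF eta_pos] p])
  qed
  have Lself: "L t q (\<pi> t q) = V t q + h (\<pi> t q) q" for t q
    using adv_self[OF pol[of t], of c h q] unfolding adv_def L_def V_def by simp
  have LA: "L t q (\<pi> (Suc t) q) - L t q (\<pi> t q) = A t q" for t q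
    unfolding Lself unfolding L_def A_def adv_def V_def by simp
  have LAs: "L t q (\<pi> (Suc t) q) - L t q (\<pi>opt q) = A t q - As t q" for t q
    unfolding L_def A_def As_def adv_def by simp
  have Aneg: "A t q \<le> 0" for t q
  proof -
    have "\<eta> t * A t q + bregman \<omega> gw (\<pi> (Suc t) q) (\<pi> t q) + bregman \<omega> gw (\<pi> t q) (\<pi> (Suc t) q) \<le> 0"
      using tp[OF inS[of t q], of t q] LA[of t q] by (simp add: bregman_def)
    moreover have "0 \<le> bregman \<omega> gw (\<pi> (Suc t) q) (\<pi> t q)" by (rule Bnn[OF inS])
    moreover have "0 \<le> bregman \<omega> gw (\<pi> t q) (\<pi> (Suc t) q)" by (rule Bnn[OF inS])
    ultimately have "\<eta> t * A t q \<le> 0" by linarith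
    then show ?thesis using eta_pos[of t] by (simp add: mult_le_0_iff)
  qed
  have mono1: "V (Suc t) q \<le> V t q + A t q" for t q
  proof -
    have "V (Suc t) q - V t q = (\<Sum>r\<in>UNIV. K (\<pi> (Suc t)) q r * A t r)"
      unfolding V_def A_def by (rule PDL[OF pol pol])
    also have "\<dots> \<le> (\<Sum>r\<in>UNIV. if r = q then K (\<pi> (Suc t)) q q * A t q else 0)"
      by (rule sum_mono) (auto intro: mult_nonneg_nonpos K_nonneg[OF pol] Aneg)
    also have "\<dots> = K (\<pi> (Suc t)) q q * A t q" by simp
    also have "\<dots> \<le> A t q"
    proof -
      have "1 \<le> K (\<pi> (Suc t)) q q" by (rule K_diag[OF pol])
      then have "(K (\<pi> (Suc t)) q q - 1) * A t q \<le> 0" using Aneg[of t q] by (intro mult_nonneg_nonpos) auto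
      then show ?thesis by (simp add: algebra_simps)
    qed
    finally show ?thesis by simp
  qed
  have mono: "V (Suc t) q \<le> V t q" for t q using mono1[of t q] Aneg[of t q] by simp
  have stepb: "\<eta> t * (V (Suc t) q - V t q - As t q) + D (Suc t) q \<le> D t q" for t q
  proof -
    have "\<eta> t * (A t q - As t q) + bregman \<omega> gw (\<pi> (Suc t) q) (\<pi> t q) + D (Suc t) q \<le> D t q"
      using tp[OF inSo[of q], of t q] LAs[of t q] unfolding D_def by simp
    moreover have "0 \<le> bregman \<omega> gw (\<pi> (Suc t) q) (\<pi> t q)" by (rule Bnn[OF inS])
    moreover have "\<eta> t * (V (Suc t) q - V t q - As t q) \<le> \<eta> t * (A t q - As t q)"
      using mono1[of t q] eta_pos[of t] by (intro mult_left_mono) auto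
    ultimately show ?thesis by linarith
  qed
  define Ks where "Ks q = K \<pi>opt s q" for q
  have Ksnn: "0 \<le> Ks q" for q unfolding Ks_def by (rule K_nonneg[OF opt_policy])
  have PDLs: "Vs s - V t s = (\<Sum>q\<in>UNIV. Ks q * As t q)" for t
    unfolding Vs_def V_def Ks_def As_def by (rule PDL[OF pol opt_policy])
  define Delta where "Delta t q = V t q - Vs q" for t q
  have Dlnn: "0 \<le> Delta t q" for t q unfolding Delta_def V_def Vs_def using opt[OF pol] by simp
  define G where "G t = (\<Sum>q\<in>UNIV. Ks q * Delta t q) + (\<Sum>q\<in>UNIV. Ks q * D t q) / \<eta> t" for t
  have sumb: "\<eta> t * ((\<Sum>q\<in>UNIV. Ks q * Delta (Suc t) q) - (\<Sum>q\<in>UNIV. Ks q * Delta t q) + Delta t s)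
      + (\<Sum>q\<in>UNIV. Ks q * D (Suc t) q) \<le> (\<Sum>q\<in>UNIV. Ks q * D t q)" for t
  proof -
    have "(\<Sum>q\<in>UNIV. Ks q * (\<eta> t * (V (Suc t) q - V t q - As t q) + D (Suc t) q)) \<le> (\<Sum>q\<in>UNIV. Ks q * D t q)"
      by (intro sum_mono mult_left_mono stepb Ksnn)
    moreover have "(\<Sum>q\<in>UNIV. Ks q * (\<eta> t * (V (Suc t) q - V t q - As t q) + D (Suc t) q))
       = \<eta> t * ((\<Sum>q\<in>UNIV. Ks q * Delta (Suc t) q) - (\<Sum>q\<in>UNIV. Ks q * Delta t q) - (\<Sum>q\<in>UNIV. Ks q * As t q))
         + (\<Sum>q\<in>UNIV. Ks q * D (Suc t) q)"
      unfolding Delta_def by (simp add: algebra_simps sum.distrib sum_subtractf sum_distrib_left)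
    moreover have "Delta t s = - (\<Sum>q\<in>UNIV. Ks q * As t q)" using PDLs[of t] unfolding Delta_def by simp
    ultimately show ?thesis by simp
  qed
  have Gstep: "G (Suc t) + Delta t s \<le> G t" for t
  proof -
    have ED: "0 \<le> (\<Sum>q\<in>UNIV. Ks q * D (Suc t) q)" by (intro sum_nonneg mult_nonneg_nonneg Ksnn Dnn)
    have "\<eta> t \<le> \<eta> (Suc t)" using eta_mono by (simp add: mono_def)
    then have "(\<Sum>q\<in>UNIV. Ks q * D (Suc t) q) / \<eta> (Suc t) \<le> (\<Sum>q\<in>UNIV. Ks q * D (Suc t) q) / \<eta> t"
      using ED eta_pos[of t] by (intro divide_left_mono) auto
    moreover have "(\<Sum>q\<in>UNIV. Ks q * Delta (Suc t) q) - (\<Sum>q\<in>UNIV. Ks q * Delta t q) + Delta t s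
      + (\<Sum>q\<in>UNIV. Ks q * D (Suc t) q) / \<eta> t \<le> (\<Sum>q\<in>UNIV. Ks q * D t q) / \<eta> t"
    proof -
      let ?X = "(\<Sum>q\<in>UNIV. Ks q * Delta (Suc t) q) - (\<Sum>q\<in>UNIV. Ks q * Delta t q) + Delta t s"
      let ?Y = "(\<Sum>q\<in>UNIV. Ks q * D (Suc t) q)"
      have "(\<eta> t * ?X + ?Y) / \<eta> t \<le> (\<Sum>q\<in>UNIV. Ks q * D t q) / \<eta> t"
        using sumb[of t] eta_pos[of t] by (intro divide_right_mono) auto
      moreover have "(\<eta> t * ?X + ?Y) / \<eta> t = ?X + ?Y / \<eta> t"
        using eta_pos[of t] by (simp add: add_divide_distrib)
      ultimately show ?thesis by simp
    qed
    ultimately show ?thesis unfolding G_def by linarith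
  qed
  have Gsum: "G n + (\<Sum>t<n. Delta t s) \<le> G 0" for n
  proof (induction n)
    case 0 then show ?case by simp
  next
    case (Suc n) then show ?case using Gstep[of n] by simp
  qed
  have Gnn: "0 \<le> G n" for n
    unfolding G_def using eta_pos[of n]
    by (intro add_nonneg_nonneg divide_nonneg_pos sum_nonneg mult_nonneg_nonneg Ksnn Dnn Dlnn) auto
  have Dmono: "Delta n s \<le> Delta t s" if "t \<le> n" for t n
    using that
  proof (induction n rule: dec_induct)
    case base then show ?case by simp
  next
    case (step n) then show ?case using mono[of n s] unfolding Delta_def by simp
  qed
  have "real k * Delta k s = (\<Sum>t<k. Delta k s)" by simp
  also have "\<dots> \<le> (\<Sum>t<k. Delta t s)" by (intro sum_mono Dmono) auto
  also have "\<dots> \<le> G 0" using Gsum[of k] Gnn[of k] by simp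
  finally have kD: "real k * Delta k s \<le> G 0" .
  have kap: "kappa P \<gamma> \<pi>opt s q = (1 - \<gamma>) * Ks q" for q unfolding kappa_def Ks_def K_def by simp
  have "(\<Sum>q\<in>UNIV. kappa P \<gamma> \<pi>opt s q *
          (\<eta> 0 * (Vf P c h \<gamma> (\<pi> 0) q - Vf P c h \<gamma> \<pi>opt q) + Dpol \<omega> gw \<pi>opt (\<pi> 0) q))
       = (1 - \<gamma>) * (\<eta> 0 * (\<Sum>q\<in>UNIV. Ks q * Delta 0 q) + (\<Sum>q\<in>UNIV. Ks q * D 0 q))"
  proof -
    have "(\<Sum>q\<in>UNIV. kappa P \<gamma> \<pi>opt s q *
          (\<eta> 0 * (Vf P c h \<gamma> (\<pi> 0) q - Vf P c h \<gamma> \<pi>opt q) + Dpol \<omega> gw \<pi>opt (\<pi> 0) q))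
       = (\<Sum>q\<in>UNIV. (1 - \<gamma>) * (\<eta> 0 * (Ks q * Delta 0 q) + Ks q * D 0 q))"
      unfolding kap Delta_def V_def Vs_def D_def Dpol_def by (intro sum.cong refl) (simp add: algebra_simps)
    also have "\<dots> = (1 - \<gamma>) * (\<Sum>q\<in>UNIV. \<eta> 0 * (Ks q * Delta 0 q) + Ks q * D 0 q)"
      by (rule sum_distrib_left[symmetric])
    also have "(\<Sum>q\<in>UNIV. \<eta> 0 * (Ks q * Delta 0 q) + Ks q * D 0 q) = \<eta> 0 * (\<Sum>q\<in>UNIV. Ks q * Delta 0 q) + (\<Sum>q\<in>UNIV. Ks q * D 0 q)"
      by (simp add: sum.distrib sum_distrib_left)
    finally show ?thesis .
  qed
  also have "\<dots> = (1 - \<gamma>) * \<eta> 0 * G 0" unfolding G_def by (rule arith1[OF eta_pos[of 0]])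
  finally have R0: "(\<Sum>q\<in>UNIV. kappa P \<gamma> \<pi>opt s q *
          (\<eta> 0 * (Vf P c h \<gamma> (\<pi> 0) q - Vf P c h \<gamma> \<pi>opt q) + Dpol \<omega> gw \<pi>opt (\<pi> 0) q)) = (1 - \<gamma>) * \<eta> 0 * G 0" .
  have "Delta k s \<le> (\<Sum>q\<in>UNIV. kappa P \<gamma> \<pi>opt s q *
          (\<eta> 0 * (Vf P c h \<gamma> (\<pi> 0) q - Vf P c h \<gamma> \<pi>opt q) + Dpol \<omega> gw \<pi>opt (\<pi> 0) q))
       / (\<eta> 0 * (1 - \<gamma>) * real k)"
    by (rule arith2[OF R0 eta_pos[of 0] gamma(2) k kD])
  then show ?thesis unfolding Delta_def V_def Vs_def .
qed

end
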